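(* Let $T$ be a tree with at least one edge, let $p(T)$ be the number of pendant vertices of $T$, and let $\widetilde{T}$ be the subtree obtained from $T$ by removing all pendant vertices of $T$. Then (i) $\alpha(T)<\alpha(\widetilde{T})+p(T)$; (ii) if $D\subseteq V_T$ satisfies $\alpha(T)=\alpha(T-D)+|D|$, then there is a pendant vertex $v$ of $T$ with $v\notin D$.
   Context: $\alpha(\cdot)$ denotes the independence number. A pendant vertex is a vertex of degree one. $T-D$ denotes the graph obtained from $T$ by deleting the vertices of $D$ and their incident edges. *)

theory Defs
  imports Main
begin

definition sgraph :: "'a set \<Rightarrow> 'a set set \<Rightarrow> bool" where
  "sgraph V E \<longleftrightarrow> finite V \<and> (\<forall>e\<in>E. e \<subseteq> V \<and> card e = 2)"

definition degree :: "'a set \<Rightarrow> 'a set set \<Rightarrow> 'a \<Rightarrow> nat" where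
  "degree V E v = card {u\<in>V. {u, v} \<in> E}"

definition pendant :: "'a set \<Rightarrow> 'a set set \<Rightarrow> 'a \<Rightarrow> bool" where
  "pendant V E v \<longleftrightarrow> v \<in> V \<and> degree V E v = 1"

definition pendants :: "'a set \<Rightarrow> 'a set set \<Rightarrow> 'a set" where
  "pendants V E = {v. pendant V E v}"

text \<open>Edges of the subgraph induced by a vertex set S (i.e. the graph minus the other vertices).\<close>
definition induced_edges :: "'a set set \<Rightarrow> 'a set \<Rightarrow> 'a set set" where
  "induced_edges E S = {e\<in>E. e \<subseteq> S}"

definition connected_graph :: "'a set \<Rightarrow> 'a set set \<Rightarrow> bool" where
  "connected_graph V E \<longleftrightarrow>
     (\<forall>u\<in>V. \<forall>v\<in>V. (u, v) \<in> {(x, y). {x, y} \<in> E}\<^sup>*)"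

definition has_cycle :: "'a set \<Rightarrow> 'a set set \<Rightarrow> bool" where
  "has_cycle V E \<longleftrightarrow> (\<exists>cs. length cs \<ge> 3 \<and> distinct cs \<and> set cs \<subseteq> V \<and>
      (\<forall>i<length cs. {cs ! i, cs ! ((i + 1) mod length cs)} \<in> E))"

definition is_tree :: "'a set \<Rightarrow> 'a set set \<Rightarrow> bool" where
  "is_tree V E \<longleftrightarrow> sgraph V E \<and> V \<noteq> {} \<and> connected_graph V E \<and> \<not> has_cycle V E"

definition independent :: "'a set set \<Rightarrow> 'a set \<Rightarrow> bool" where
  "independent E S \<longleftrightarrow> (\<forall>u\<in>S. \<forall>v\<in>S. {u, v} \<notin> E)"

definition indep_num :: "'a set \<Rightarrow> 'a set set \<Rightarrow> nat" where
  "indep_num V E = Max {card S | S. S \<subseteq> V \<and> independent E S}"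

end

theory Submission
  imports Defs
begin

definition nbr :: "'a set \<Rightarrow> 'a set set \<Rightarrow> 'a \<Rightarrow> 'a set" where
  "nbr V E v = {u\<in>V. {u, v} \<in> E}"

lemma degree_nbr: "degree V E v = card (nbr V E v)"
  by (simp add: degree_def nbr_def)

lemma sgraph_edge:
  assumes "sgraph V E" "e \<in> E"
  shows "\<exists>a b. a \<noteq> b \<and> e = {a, b} \<and> a \<in> V \<and> b \<in> V"
proof -
  have "e \<subseteq> V" "card e = 2" using assms by (auto simp: sgraph_def)
  then show ?thesis by (auto simp: card_2_iff)
qed

lemma sgraph_no_loop: "sgraph V E \<Longrightarrow> {a, a} \<notin> E"
  by (auto simp: sgraph_def)

lemma sgraph_in_V: "sgraph V E \<Longrightarrow> {a, b} \<in> E \<Longrightarrow> a \<in> V \<and> b \<in> V"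
  by (auto simp: sgraph_def)

lemma sgraph_finite_E: "sgraph V E \<Longrightarrow> finite E"
proof -
  assume a: "sgraph V E"
  then have "E \<subseteq> Pow V" by (auto simp: sgraph_def)
  moreover have "finite (Pow V)" using a by (simp add: sgraph_def)
  ultimately show ?thesis by (rule finite_subset)
qed

lemma finite_nbr: "sgraph V E \<Longrightarrow> finite (nbr V E v)"
  by (simp add: sgraph_def nbr_def)

lemma conn_nbr:
  assumes "sgraph V E" "connected_graph V E" "s \<in> V" "t \<in> V" "s \<noteq> t"
  shows "\<exists>u. u \<in> nbr V E s"
proof -
  have "(s, t) \<in> {(x, y). {x, y} \<in> E}\<^sup>*" using assms by (auto simp: connected_graph_def)
  then obtain u where "{s, u} \<in> E"
    using assms(5) by (auto elim: converse_rtranclE)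
  then have "u \<in> nbr V E s" using sgraph_in_V[OF assms(1)] by (auto simp: nbr_def insert_commute)
  then show ?thesis by blast
qed

lemma leaf_exists:
  assumes sg: "sgraph V E" and nc: "\<not> has_cycle V E" and eE: "e \<in> E"
  shows "\<exists>l x. l \<in> V \<and> nbr V E l = {x}"
proof -
  define P where "P cs \<longleftrightarrow> distinct cs \<and> set cs \<subseteq> V \<and>
      (\<forall>i. Suc i < length cs \<longrightarrow> {cs ! i, cs ! Suc i} \<in> E) \<and> length cs \<ge> 2" for cs
  obtain a b where ab: "a \<noteq> b" "e = {a, b}" "a \<in> V" "b \<in> V" using sgraph_edge[OF sg eE] by blast
  have P0: "P [a, b]" using ab eE by (auto simp: P_def less_Suc_eq)
  have bound: "\<forall>cs. P cs \<longrightarrow> length cs < card V + 1"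
  proof (intro allI impI)
    fix cs assume "P cs"
    then have "card (set cs) = length cs" "set cs \<subseteq> V" by (auto simp: P_def distinct_card)
    moreover have "finite V" using sg by (simp add: sgraph_def)
    ultimately show "length cs < card V + 1" by (metis card_mono less_Suc_eq_le Suc_eq_plus1)
  qed
  obtain cs where Pcs: "P cs" and mx: "\<forall>ys. P ys \<longrightarrow> length ys \<le> length cs"
    using Lattices_Big.ex_has_greatest_nat[of P "[a,b]" length "card V + 1"] P0 bound by blast
  have dcs: "distinct cs" and scs: "set cs \<subseteq> V" and ecs: "\<And>i. Suc i < length cs \<Longrightarrow> {cs ! i, cs ! Suc i} \<in> E"
    and lcs: "length cs \<ge> 2" using Pcs by (auto simp: P_def)
  define x0 where "x0 = cs ! 0"
  define x1 where "x1 = cs ! 1"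
  have "cs ! 0 \<in> set cs" using lcs by (cases cs) auto
  then have x0V: "x0 \<in> V" using scs by (auto simp: x0_def)
  have e01: "{x0, x1} \<in> E" using ecs[of 0] lcs by (simp add: x0_def x1_def)
  have "nbr V E x0 = {x1}"
  proof
    show "{x1} \<subseteq> nbr V E x0" using e01 sgraph_in_V[OF sg e01] by (auto simp: nbr_def insert_commute)
  next
    show "nbr V E x0 \<subseteq> {x1}"
    proof
      fix y assume yn: "y \<in> nbr V E x0"
      then have yV: "y \<in> V" and ey: "{y, x0} \<in> E" by (auto simp: nbr_def)
      show "y \<in> {x1}"
      proof (rule ccontr)
        assume ny: "y \<notin> {x1}"
        show False
        proof (cases "y \<in> set cs")
          case True
          then obtain i where i: "i < length cs" "cs ! i = y" by (auto simp: in_set_conv_nth)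
          have "i \<noteq> 0" proof assume "i = 0" then show False using i ey sgraph_no_loop[OF sg, of x0] by (simp add: x0_def) qed
          moreover have "i \<noteq> 1" using i ny by (auto simp: x1_def)
          ultimately have i2: "i \<ge> 2" by auto
          define cy where "cy = take (Suc i) cs"
          have lcy: "length cy = Suc i" using i by (simp add: cy_def)
          have "has_cycle V E"
            unfolding has_cycle_def
          proof (intro exI conjI allI impI)
            show "3 \<le> length cy" using lcy i2 by simp
            show "distinct cy" using dcs by (simp add: cy_def)
            show "set cy \<subseteq> V" using scs set_take_subset[of "Suc i" cs] by (simp add: cy_def)
            fix j assume j: "j < length cy"
            show "{cy ! j, cy ! ((j + 1) mod length cy)} \<in> E"
            proof (cases "j < i")
              case True
              then have "(j + 1) mod length cy = Suc j" using lcy by simp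
              then show ?thesis using True i ecs[of j] by (simp add: cy_def)
            next
              case False
              then have "j = i" using j lcy by simp
              then show ?thesis using lcy i ey by (simp add: cy_def x0_def)
            qed
          qed
          then show False using nc by simp
        next
          case False
          have "P (y # cs)"
            unfolding P_def
          proof (intro conjI allI impI)
            show "distinct (y # cs)" using False dcs by simp
            show "set (y # cs) \<subseteq> V" using yV scs by simp
            show "2 \<le> length (y # cs)" using lcs by simp
            fix k assume k: "Suc k < length (y # cs)"
            show "{(y # cs) ! k, (y # cs) ! Suc k} \<in> E"
            proof (cases k)
              case 0 then show ?thesis using ey by (simp add: x0_def)
            next
              case (Suc m) then show ?thesis using k ecs[of m] by simp
            qed
          qed
          then show False using mx by fastforce
        qed
      qed
    qed
  qed
  then show ?thesis using x0V by blast
qed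


lemma tree_facts:
  "card V = n \<Longrightarrow> is_tree V E \<Longrightarrow>
     card E + 1 = card V \<and> (\<exists>c. \<forall>u v. {u, v} \<in> E \<longrightarrow> c u \<noteq> (c v :: bool))"
proof (induction n arbitrary: V E)
  case 0
  then show ?case by (auto simp: is_tree_def sgraph_def)
next
  case (Suc n)
  have sg: "sgraph V E" and ne: "V \<noteq> {}" and cn: "connected_graph V E" and nc: "\<not> has_cycle V E"
    using Suc.prems by (auto simp: is_tree_def)
  have fV: "finite V" using sg by (simp add: sgraph_def)
  show ?case
  proof (cases "n = 0")
    case True
    then obtain a where Va: "V = {a}" using Suc.prems(1) card_1_singletonE by auto
    have "E = {}"
    proof (rule ccontr)
      assume "E \<noteq> {}"
      then obtain e where "e \<in> E" by blast
      then show False using sgraph_edge[OF sg] Va by blast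
    qed
    then show ?thesis using Va by simp
  next
    case False
    then have "card V \<ge> 2" using Suc.prems(1) by simp
    then obtain s t where st: "s \<in> V" "t \<in> V" "s \<noteq> t"
      using card_le_Suc0_iff_eq[OF fV] by fastforce
    obtain u where "u \<in> nbr V E s" using conn_nbr[OF sg cn st] by blast
    then have "{u, s} \<in> E" by (simp add: nbr_def)
    then obtain l x where lV: "l \<in> V" and nl: "nbr V E l = {x}" using leaf_exists[OF sg nc] by blast
    have xV: "x \<in> V" and elx: "{x, l} \<in> E" using nl by (auto simp: nbr_def)
    have xl: "x \<noteq> l" using elx sgraph_no_loop[OF sg] by auto
    define V' where "V' = V - {l}"
    define E' where "E' = {e\<in>E. l \<notin> e}"
    have nbrl: "\<And>w. {w, l} \<in> E \<Longrightarrow> w = x"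
    proof -
      fix w assume "{w, l} \<in> E"
      then have "w \<in> nbr V E l" using sgraph_in_V[OF sg] by (auto simp: nbr_def)
      then show "w = x" using nl by simp
    qed
    have Eeq: "E = insert {x, l} E'"
    proof
      show "E \<subseteq> insert {x, l} E'"
      proof
        fix e assume eE: "e \<in> E"
        show "e \<in> insert {x, l} E'"
        proof (cases "l \<in> e")
          case True
          obtain a b where ab: "a \<noteq> b" "e = {a, b}" using sgraph_edge[OF sg eE] by blast
          show ?thesis
          proof (cases "a = l")
            case True
            then have "{b, l} \<in> E" using eE ab by (simp add: insert_commute)
            then have "b = x" by (rule nbrl)
            then show ?thesis using ab True by (simp add: insert_commute)
          next
            case False
            then have "b = l" using ab \<open>l \<in> e\<close> by auto
            then have "{a, l} \<in> E" using eE ab by simp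
            then have "a = x" by (rule nbrl)
            then show ?thesis using ab \<open>b = l\<close> by simp
          qed
        next
          case False then show ?thesis using eE by (simp add: E'_def)
        qed
      qed
      show "insert {x, l} E' \<subseteq> E" using elx by (auto simp: E'_def)
    qed
    have notin: "{x, l} \<notin> E'" by (simp add: E'_def)
    have fE': "finite E'" using sgraph_finite_E[OF sg] by (simp add: E'_def)
    have cardE: "card E = card E' + 1" using Eeq notin fE' by simp
    have sg': "sgraph V' E'" using sg by (auto simp: sgraph_def V'_def E'_def)
    have ne': "V' \<noteq> {}" using xV xl by (auto simp: V'_def)
    have nc': "\<not> has_cycle V' E'"
      using nc unfolding has_cycle_def V'_def E'_def by blast
    define R where "R = {(a, b). {a, b} \<in> E}"
    define R' where "R' = {(a, b). {a, b} \<in> E'}"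
    have walk: "(a, v) \<in> R\<^sup>* \<Longrightarrow> a \<noteq> l \<Longrightarrow> (v \<noteq> l \<longrightarrow> (a, v) \<in> R'\<^sup>*) \<and> (v = l \<longrightarrow> (a, x) \<in> R'\<^sup>*)"
      for a v
    proof (induction rule: rtrancl_induct)
      case base then show ?case by simp
    next
      case (step v w)
      have vw: "{v, w} \<in> E" using step.hyps(2) by (simp add: R_def)
      show ?case
      proof (cases "w = l")
        case True
        then have "v \<noteq> l" using vw sgraph_no_loop[OF sg] by auto
        moreover have "v = x" using vw True nbrl by simp
        ultimately show ?thesis using step True by simp
      next
        case False
        show ?thesis
        proof (cases "v = l")
          case True
          then have "w = x" using vw nbrl by (simp add: insert_commute)
          then show ?thesis using step True False by simp
        next
          case vl: False
          then have "(v, w) \<in> R'" using vw False by (simp add: R'_def E'_def)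
          then show ?thesis using step vl False by (meson rtrancl.rtrancl_into_rtrancl)
        qed
      qed
    qed
    have cn': "connected_graph V' E'"
      unfolding connected_graph_def
    proof (intro ballI)
      fix a b assume a: "a \<in> V'" and b: "b \<in> V'"
      then have "(a, b) \<in> R\<^sup>*" using cn by (auto simp: connected_graph_def V'_def R_def)
      then show "(a, b) \<in> {(x, y). {x, y} \<in> E'}\<^sup>*" using walk a b by (auto simp: V'_def R'_def)
    qed
    have tr': "is_tree V' E'" using sg' ne' cn' nc' by (simp add: is_tree_def)
    have cV': "card V' = n" using Suc.prems(1) lV by (simp add: V'_def)
    obtain c where c: "\<forall>u v. {u, v} \<in> E' \<longrightarrow> c u \<noteq> (c v :: bool)" and cE': "card E' + 1 = card V'"
      using Suc.IH[OF cV' tr'] by blast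
    define c2 where "c2 = c(l := \<not> c x)"
    have "\<forall>u v. {u, v} \<in> E \<longrightarrow> c2 u \<noteq> c2 v"
    proof (intro allI impI)
      fix u v assume uv: "{u, v} \<in> E"
      show "c2 u \<noteq> c2 v"
      proof (cases "u = l \<or> v = l")
        case True
        then show ?thesis
        proof
          assume ul: "u = l"
          then have "v = x" using uv nbrl by (simp add: insert_commute)
          then show ?thesis using ul xl by (simp add: c2_def)
        next
          assume vl: "v = l"
          then have "u = x" using uv nbrl by simp
          then show ?thesis using vl xl by (simp add: c2_def)
        qed
      next
        case False
        then have "{u, v} \<in> E'" using uv by (auto simp: E'_def)
        then show ?thesis using c False by (simp add: c2_def)
      qed
    qed
    moreover have "card E + 1 = card V" using cardE cE' cV' Suc.prems(1) by simp
    ultimately show ?thesis by blast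
  qed
qed


lemma indep_set_finite: "finite V \<Longrightarrow> finite {card S | S. S \<subseteq> V \<and> independent E S}"
proof -
  assume "finite V"
  then have "finite (card ` Pow V)" by simp
  moreover have "{card S | S. S \<subseteq> V \<and> independent E S} \<subseteq> card ` Pow V" by auto
  ultimately show ?thesis using finite_subset by blast
qed

lemma indep_num_ge:
  "finite V \<Longrightarrow> S \<subseteq> V \<Longrightarrow> independent E S \<Longrightarrow> card S \<le> indep_num V E"
  unfolding indep_num_def by (rule Max_ge) (auto dest: indep_set_finite)

lemma indep_num_obtain:
  assumes "finite V"
  obtains S where "S \<subseteq> V" "independent E S" "indep_num V E = card S"
proof -
  have "{}\<subseteq> V" "independent E {}" by (auto simp: independent_def)
  then have ne: "{card S | S. S \<subseteq> V \<and> independent E S} \<noteq> {}" by blast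
  have "indep_num V E \<in> {card S | S. S \<subseteq> V \<and> independent E S}"
    unfolding indep_num_def using Max_in[OF indep_set_finite[OF assms] ne] .
  then show ?thesis using that by blast
qed

lemma lower_bound:
  assumes fW: "finite W" and sub: "E' \<subseteq> E" and c: "\<forall>u v. {u, v} \<in> E \<longrightarrow> c u \<noteq> (c v :: bool)"
  shows "card W \<le> 2 * indep_num W E'"
proof -
  define A where "A = {w\<in>W. c w}"
  define B where "B = {w\<in>W. \<not> c w}"
  have iA: "independent E' A" using c sub by (auto simp: independent_def A_def)
  have iB: "independent E' B" using c sub by (auto simp: independent_def B_def)
  have "card A \<le> indep_num W E'" using indep_num_ge[OF fW _ iA] by (auto simp: A_def)
  moreover have "card B \<le> indep_num W E'" using indep_num_ge[OF fW _ iB] by (auto simp: B_def)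
  moreover have "card W = card A + card B"
  proof -
    have "W = A \<union> B" "A \<inter> B = {}" by (auto simp: A_def B_def)
    moreover have "finite A" "finite B" using fW by (auto simp: A_def B_def)
    ultimately show ?thesis by (simp add: card_Un_disjoint)
  qed
  ultimately show ?thesis by simp
qed

lemma upper_bound:
  assumes sg: "sgraph V E" and cn: "connected_graph V E" and cE: "card E + 1 = card V"
    and c2: "card V \<ge> 2" and SV: "S \<subseteq> V" and iS: "independent E S"
  shows "2 * card S \<le> card V - 1 + card (S \<inter> pendants V E)"
proof -
  have fV: "finite V" using sg by (simp add: sgraph_def)
  have fS: "finite S" using SV fV finite_subset by blast
  let ?P = "pendants V E"
  have dg: "\<And>s. s \<in> S \<Longrightarrow> (if s \<in> ?P then 1 else 2) \<le> card (nbr V E s)"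
  proof -
    fix s assume sS: "s \<in> S"
    then have sV: "s \<in> V" using SV by blast
    obtain t where t: "t \<in> V" "t \<noteq> s"
    proof -
      obtain a b where "a \<in> V" "b \<in> V" "a \<noteq> b"
        using c2 card_le_Suc0_iff_eq[OF fV] by fastforce
      then show ?thesis using that by metis
    qed
    obtain u where "u \<in> nbr V E s" using conn_nbr[OF sg cn sV t(1)] t by metis
    then have g1: "card (nbr V E s) \<ge> 1" using finite_nbr[OF sg] card_0_eq[of "nbr V E s"] by fastforce
    show "(if s \<in> ?P then 1 else 2) \<le> card (nbr V E s)"
    proof (cases "s \<in> ?P")
      case True then show ?thesis using g1 by simp
    next
      case False
      then have "card (nbr V E s) \<noteq> 1" using sV by (simp add: pendants_def pendant_def degree_nbr)
      then show ?thesis using g1 False by simp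
    qed
  qed
  define Sg where "Sg = Sigma S (nbr V E)"
  have cSg: "card Sg = (\<Sum>s\<in>S. card (nbr V E s))"
    unfolding Sg_def using fS finite_nbr[OF sg] by simp
  have inj: "inj_on (\<lambda>(s, u). {u, s}) Sg"
  proof (rule inj_onI)
    fix p q assume p: "p \<in> Sg" and q: "q \<in> Sg" and eq: "(\<lambda>(s, u). {u, s}) p = (\<lambda>(s, u). {u, s}) q"
    obtain s u where pp: "p = (s, u)" by force
    obtain s' u' where qq: "q = (s', u')" by force
    have ss: "s \<in> S" "s' \<in> S" and e: "{u, s} \<in> E" using p q pp qq by (auto simp: Sg_def nbr_def)
    have eq2: "{u, s} = {u', s'}" using eq pp qq by simp
    show "p = q"
    proof (cases "s = s'")
      case True then show ?thesis using eq2 pp qq by (auto simp: doubleton_eq_iff)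
    next
      case False
      then have "u = s'" using eq2 by (auto simp: doubleton_eq_iff)
      then have False using e ss iS by (auto simp: independent_def)
      then show ?thesis ..
    qed
  qed
  have img: "(\<lambda>(s, u). {u, s}) ` Sg \<subseteq> E" by (auto simp: Sg_def nbr_def)
  have "card Sg \<le> card E"
    using card_inj_on_le[OF inj img sgraph_finite_E[OF sg]] .
  moreover have "(\<Sum>s\<in>S. (if s \<in> ?P then 1 else 2)) \<le> (\<Sum>s\<in>S. card (nbr V E s))"
    using dg by (rule sum_mono)
  moreover have "(\<Sum>s\<in>S. (if s \<in> ?P then 1 else 2::nat)) = card (S \<inter> ?P) + 2 * card (S - ?P)"
    using fS by (simp add: sum.If_cases Int_commute Diff_eq)
  moreover have "card S = card (S \<inter> ?P) + card (S - ?P)"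
    using fS by (metis card_Int_Diff Int_commute)
  ultimately show ?thesis using cSg cE by linarith
qed

lemma main_ineq:
  assumes tr: "is_tree V E" and ne: "E \<noteq> {}" and PD: "pendants V E \<subseteq> D" and DV: "D \<subseteq> V"
  shows "indep_num V E < indep_num (V - D) (induced_edges E (V - D)) + card D"
proof -
  have sg: "sgraph V E" and cn: "connected_graph V E" using tr by (auto simp: is_tree_def)
  have fV: "finite V" using sg by (simp add: sgraph_def)
  obtain cc where cc: "\<forall>u v. {u, v} \<in> E \<longrightarrow> cc u \<noteq> (cc v :: bool)"
    using tree_facts[OF refl tr] by blast
  have cE: "card E + 1 = card V" using tree_facts[OF refl tr] by blast
  obtain e where "e \<in> E" using ne by blast
  then obtain a b where "a \<noteq> b" "a \<in> V" "b \<in> V" using sgraph_edge[OF sg] by blast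
  then have c2: "card V \<ge> 2"
  proof -
    have "\<not> card V \<le> Suc 0" using card_le_Suc0_iff_eq[OF fV] \<open>a \<noteq> b\<close> \<open>a \<in> V\<close> \<open>b \<in> V\<close> by blast
    then show ?thesis by simp
  qed
  obtain S where SV: "S \<subseteq> V" and iS: "independent E S" and aS: "indep_num V E = card S"
    using indep_num_obtain[OF fV] by blast
  have ub: "2 * card S \<le> card V - 1 + card (S \<inter> pendants V E)"
    using upper_bound[OF sg cn cE c2 SV iS] .
  have fD: "finite D" using DV fV finite_subset by blast
  have "card (S \<inter> pendants V E) \<le> card D" using PD fD by (meson card_mono inf.coboundedI2)
  moreover have "card (V - D) \<le> 2 * indep_num (V - D) (induced_edges E (V - D))"
    using lower_bound[of "V - D" "induced_edges E (V - D)" E cc] fV cc by (auto simp: induced_edges_def)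
  moreover have "card (V - D) = card V - card D" using card_Diff_subset[OF fD DV] .
  moreover have "card D \<le> card V" using card_mono[OF fV DV] .
  ultimately show ?thesis using ub aS c2 by linarith
qed

theorem corollary1p17:
  fixes V :: "'a set" and E :: "'a set set"
  assumes "is_tree V E" and "E \<noteq> {}"
  shows "indep_num V E
           < indep_num (V - pendants V E) (induced_edges E (V - pendants V E)) + card (pendants V E)
         \<and> (\<forall>D. D \<subseteq> V \<and> indep_num V E = indep_num (V - D) (induced_edges E (V - D)) + card D
               \<longrightarrow> (\<exists>v. pendant V E v \<and> v \<notin> D))"
proof
  show "indep_num V E
           < indep_num (V - pendants V E) (induced_edges E (V - pendants V E)) + card (pendants V E)"
  proof -
    have "pendants V E \<subseteq> V" by (auto simp: pendants_def pendant_def)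
    then show ?thesis using main_ineq[OF assms order_refl] by blast
  qed
  show "\<forall>D. D \<subseteq> V \<and> indep_num V E = indep_num (V - D) (induced_edges E (V - D)) + card D
               \<longrightarrow> (\<exists>v. pendant V E v \<and> v \<notin> D)"
  proof (intro allI impI)
    fix D assume D: "D \<subseteq> V \<and> indep_num V E = indep_num (V - D) (induced_edges E (V - D)) + card D"
    show "\<exists>v. pendant V E v \<and> v \<notin> D"
    proof (rule ccontr)
      assume "\<not> (\<exists>v. pendant V E v \<and> v \<notin> D)"
      then have "pendants V E \<subseteq> D" by (auto simp: pendants_def)
      then have "indep_num V E < indep_num (V - D) (induced_edges E (V - D)) + card D"
        using main_ineq[OF assms] D by blast
      then show False using D by linarith
    qed
  qed
qed

end
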